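(* Let $\omega$ be a weight function, $W^{(\lambda)}_\alpha:=e^{\frac1\lambda\varphi^*_\omega(\lambda|\alpha|)}$ for $\lambda>0$, $\alpha\in\mathbb N_0^d$, and let $r>0$. Then: (a) $\omega(t)=O(t^{1/r})$ as $t\to+\infty$ if and only if for every $\lambda>0$ there exist $C,D\ge1$ such that $\alpha^{r\alpha}\le C D^{|\alpha|}W^{(\lambda)}_\alpha$ for all $\alpha\in\mathbb N^d$; (b) $\omega(t)=o(t^{1/r})$ as $t\to+\infty$ if and only if for all $\lambda,D>0$ there exists $C\ge1$ such that $\alpha^{r\alpha}\le C D^{|\alpha|}W^{(\lambda)}_\alpha$ for all $\alpha\in\mathbb N^d$. Moreover, in both (a) and (b) the quantifier "for every $\lambda>0$" may be replaced by "there exists $\lambda>0$".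
   Context: A weight function is a continuous increasing function $\omega:[0,+\infty)\to[0,+\infty)$ such that: ($\alpha$) there is $L\ge1$ with $\omega(2t)\le L(\omega(t)+1)$ for all $t\ge0$; ($\beta$) $\omega(t)=O(t^2)$ as $t\to+\infty$; ($\gamma$) $\log t=o(\omega(t))$ as $t\to+\infty$; ($\delta$) $\varphi_\omega(t):=\omega(e^t)$ is convex on $[0,+\infty)$. Young conjugate: $\varphi_\omega^*(s):=\sup_{t\ge0}\{ts-\varphi_\omega(t)\}$. Notation: $|\alpha|=\sum\alpha_j$, $\alpha^{r\alpha}:=\prod_j\alpha_j^{r\alpha_j}$. *)

theory Defs
  imports "HOL-Analysis.Analysis" "HOL-Library.Landau_Symbols"
begin

text \<open>Weight function omega : [0,+inf) -> [0,+inf) (values outside [0,+inf) are irrelevant).\<close>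
definition weight_function :: "(real \<Rightarrow> real) \<Rightarrow> bool" where
  "weight_function \<omega> \<longleftrightarrow>
     continuous_on {0..} \<omega> \<and> mono_on {0..} \<omega> \<and> (\<forall>t\<ge>0. \<omega> t \<ge> 0) \<and>
     (\<exists>L\<ge>1. \<forall>t\<ge>0. \<omega> (2 * t) \<le> L * (\<omega> t + 1)) \<and>
     \<omega> \<in> O[at_top](\<lambda>t. t ^ 2) \<and>
     (\<lambda>t. ln t) \<in> o[at_top](\<omega>) \<and>
     convex_on {0..} (\<lambda>t. \<omega> (exp t))"

definition phi_w :: "(real \<Rightarrow> real) \<Rightarrow> real \<Rightarrow> real" where
  "phi_w \<omega> t = \<omega> (exp t)"

definition phi_star :: "(real \<Rightarrow> real) \<Rightarrow> real \<Rightarrow> real" where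
  "phi_star \<omega> s = (SUP t\<in>{0..}. t * s - phi_w \<omega> t)"

definition abs_multi :: "('d::finite \<Rightarrow> nat) \<Rightarrow> nat" where
  "abs_multi \<alpha> = (\<Sum>i\<in>UNIV. \<alpha> i)"

definition W_seq :: "(real \<Rightarrow> real) \<Rightarrow> real \<Rightarrow> ('d::finite \<Rightarrow> nat) \<Rightarrow> real" where
  "W_seq \<omega> la \<alpha> = exp ((1 / la) * phi_star \<omega> (la * real (abs_multi \<alpha>)))"

definition multi_pow :: "real \<Rightarrow> ('d::finite \<Rightarrow> nat) \<Rightarrow> real" where
  "multi_pow r \<alpha> = (\<Prod>j\<in>UNIV. if \<alpha> j = 0 then 1 else real (\<alpha> j) powr (r * real (\<alpha> j)))"

end

theory Submission
  imports Defs "HOL-Real_Asymp.Real_Asymp"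
begin

lemma wf_nonneg: "weight_function w \<Longrightarrow> t \<ge> 0 \<Longrightarrow> w t \<ge> 0"
  unfolding weight_function_def by blast

lemma wf_mono: "weight_function w \<Longrightarrow> 0 \<le> s \<Longrightarrow> s \<le> t \<Longrightarrow> w s \<le> w t"
  unfolding weight_function_def mono_on_def by auto

lemma wf_convex: "weight_function w \<Longrightarrow> convex_on {0..} (phi_w w)"
  unfolding weight_function_def phi_w_def by (simp add: fun_eq_iff)

lemma wf_small: "weight_function w \<Longrightarrow> (\<lambda>t. ln t) \<in> o[at_top](w)"
  unfolding weight_function_def by blast

lemma phi_mono: "weight_function w \<Longrightarrow> 0 \<le> s \<Longrightarrow> s \<le> t \<Longrightarrow> phi_w w s \<le> phi_w w t"
  unfolding phi_w_def by (rule wf_mono) auto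

lemma phi_nonneg: "weight_function w \<Longrightarrow> phi_w w t \<ge> 0"
  unfolding phi_w_def by (rule wf_nonneg) auto

lemma phi_bdd:
  assumes w: "weight_function w" and s: "s \<ge> 0"
  shows "bdd_above ((\<lambda>t. t * s - phi_w w t) ` {0..})"
proof -
  have "eventually (\<lambda>x. norm (ln x) \<le> (1 / (s+1)) * norm (w x)) at_top"
    using landau_o.smallD[OF wf_small[OF w], of "1/(s+1)"] s by simp
  then obtain N where N: "\<And>x. x \<ge> N \<Longrightarrow> norm (ln x) \<le> (1 / (s+1)) * norm (w x)"
    by (auto simp: eventually_at_top_linorder)
  define X where "X = max N 1"
  have "t * s - phi_w w t \<le> s * ln X" if t: "t \<ge> 0" for t
  proof (cases "exp t \<ge> X")
    case True
    then have "norm (ln (exp t)) \<le> (1 / (s+1)) * norm (w (exp t))"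
      using X_def by (intro N) auto
    then have "\<bar>t\<bar> \<le> (1/(s+1)) * w (exp t)"
      using wf_nonneg[OF w, of "exp t"] by simp
    then have "t \<le> (1/(s+1)) * w (exp t)" by linarith
    then have "(s+1) * t \<le> phi_w w t" using s by (simp add: phi_w_def field_simps)
    moreover have "0 \<le> s * ln X" using s X_def by simp
    ultimately show ?thesis using t by (simp add: algebra_simps)
  next
    case False
    then have "t \<le> ln X" using X_def
      by (metis exp_le_cancel_iff exp_ln linorder_not_le max.strict_boundedE order_less_imp_le zero_less_one order_less_le_trans)
    then have "s * t \<le> s * ln X" using s by (intro mult_left_mono)
    then have "t * s \<le> s * ln X" by (simp add: mult.commute)
    then show ?thesis using phi_nonneg[OF w, of t] by linarith
  qed
  then show ?thesis by (auto intro!: bdd_aboveI2)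
qed

lemma phi_star_ge:
  assumes "weight_function w" "s \<ge> 0" "t \<ge> 0"
  shows "t * s - phi_w w t \<le> phi_star w s"
  unfolding phi_star_def using phi_bdd[OF assms(1,2)] assms(3)
  by (intro cSUP_upper) auto

lemma abs_multi_le: "\<alpha> j \<le> abs_multi \<alpha>"
  unfolding abs_multi_def by (rule member_le_sum) auto

lemma multi_pow_le:
  assumes "abs_multi \<alpha> = n" "n \<ge> 1" "r > 0"
  shows "multi_pow r \<alpha> \<le> real n powr (r * real n)"
proof -
  have "multi_pow r \<alpha> \<le> (\<Prod>j\<in>UNIV. real n powr (r * real (\<alpha> j)))"
    unfolding multi_pow_def
  proof (rule prod_mono, safe)
    fix j
    have "\<alpha> j \<le> n" using abs_multi_le[of \<alpha> j] assms by simp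
    show "0 \<le> (if \<alpha> j = 0 then 1 else real (\<alpha> j) powr (r * real (\<alpha> j)))" by simp
    show "(if \<alpha> j = 0 then 1 else real (\<alpha> j) powr (r * real (\<alpha> j))) \<le> real n powr (r * real (\<alpha> j))"
      using \<open>\<alpha> j \<le> n\<close> assms by (auto intro!: powr_mono2)
  qed
  also have "\<dots> = real n powr (\<Sum>j\<in>UNIV. r * real (\<alpha> j))"
    using assms by (simp add: powr_sum)
  also have "(\<Sum>j\<in>UNIV. r * real (\<alpha> j)) = r * real n"
    using assms(1) unfolding abs_multi_def by (simp add: sum_distrib_left[symmetric] flip: of_nat_sum)
  finally show ?thesis .
qed

lemma abs_multi_zero: "abs_multi \<alpha> = 0 \<Longrightarrow> multi_pow r \<alpha> = 1"
  unfolding multi_pow_def using abs_multi_le[of \<alpha>] by (simp add: le_zero_eq)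

lemma single_multi:
  fixes i0 :: "'d::finite" and n :: nat
  defines "\<alpha> \<equiv> (\<lambda>i. if i = i0 then n else 0)"
  shows "abs_multi \<alpha> = n" "multi_pow r \<alpha> = (if n = 0 then 1 else real n powr (r * real n))"
proof -
  show "abs_multi \<alpha> = n" unfolding abs_multi_def \<alpha>_def by simp
  have "multi_pow r \<alpha> = (\<Prod>j\<in>UNIV. if j = i0 then (if n = 0 then 1 else real n powr (r * real n)) else 1)"
    unfolding multi_pow_def \<alpha>_def by (intro prod.cong) auto
  also have "\<dots> = (if n = 0 then 1 else real n powr (r * real n))" by simp
  finally show "multi_pow r \<alpha> = (if n = 0 then 1 else real n powr (r * real n))" .
qed

lemma key_ineq:
  fixes n a r :: real
  assumes "n > 0" "r > 0"
  shows "n * (a - r * ln n) \<le> r * exp (a / r - 1)"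
proof -
  define y where "y = exp (a / r - 1) / n"
  have y: "y > 0" using assms by (simp add: y_def)
  have "ln y = a / r - 1 - ln n" using assms by (simp add: y_def ln_div)
  then have "a - r * ln n = r * (ln y + 1)" using assms by (simp add: field_simps)
  then have "n * (a - r * ln n) = r * n * (ln y + 1)" by simp
  also have "\<dots> \<le> r * n * y" using ln_le_minus_one[OF y] assms
    by (intro mult_left_mono) auto
  also have "\<dots> = r * exp (a / r - 1)" using assms by (simp add: y_def)
  finally show ?thesis .
qed

lemma lemmaA:
  fixes w :: "real \<Rightarrow> real"
  assumes w: "weight_function w" and r: "r > 0" and la: "la > 0" and A: "A > 0" and K: "K \<ge> 0"
    and bnd: "\<And>x. x \<ge> 1 \<Longrightarrow> w x \<le> A * x powr (1/r) + B"
  shows "multi_pow r (\<alpha> :: 'd::finite \<Rightarrow> nat) \<le> exp ((\<bar>B\<bar> + \<bar>w 1\<bar>) / la) * exp (A * exp K / la - r * K) ^ abs_multi \<alpha> * W_seq w la \<alpha>"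
proof (cases "abs_multi \<alpha> = 0")
  case True
  have "0 * 0 - phi_w w 0 \<le> phi_star w 0" by (rule phi_star_ge[OF w]) auto
  then have "- \<bar>w 1\<bar> \<le> phi_star w 0" by (simp add: phi_w_def)
  then have "- \<bar>w 1\<bar> / la \<le> phi_star w 0 / la"
    using la by (intro divide_right_mono) auto
  then have "exp (- \<bar>w 1\<bar> / la) \<le> W_seq w la \<alpha>"
    using True la by (simp add: W_seq_def)
  then have "exp (\<bar>w 1\<bar> / la) * exp (- \<bar>w 1\<bar> / la) \<le> exp ((\<bar>B\<bar> + \<bar>w 1\<bar>) / la) * W_seq w la \<alpha>"
    using la by (intro mult_mono) (auto simp: divide_right_mono)
  then show ?thesis using True abs_multi_zero[OF True] by (simp add: exp_minus field_simps)
next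
  case False
  define n where "n = abs_multi \<alpha>"
  have n: "n \<ge> 1" using False n_def by simp
  define t where "t = r * (ln n + K)"
  have t: "t \<ge> 0" using n K r by (simp add: t_def)
  have "exp t \<ge> 1" using t by simp
  have "exp t powr (1/r) = exp (t / r)" by (simp add: powr_def)
  also have "\<dots> = n * exp K" using r n by (simp add: t_def exp_add)
  finally have "phi_w w t \<le> A * (n * exp K) + B"
    using bnd[OF \<open>exp t \<ge> 1\<close>] by (simp add: phi_w_def)
  moreover have "t * (la * n) - phi_w w t \<le> phi_star w (la * n)"
    using phi_star_ge[OF w _ t] la by simp
  ultimately have ps: "r * la * n * ln n + r * la * K * n - A * n * exp K - \<bar>B\<bar> \<le> phi_star w (la * n)"
    unfolding t_def by (simp add: algebra_simps)
  have "(r * la * n * ln n + r * la * K * n - A * n * exp K - \<bar>B\<bar>) / la \<le> phi_star w (la * n) / la"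
    using ps la by (simp add: divide_right_mono)
  moreover have "r * n * ln n + (r * K - A * exp K / la) * n - \<bar>B\<bar> / la = (r * la * n * ln n + r * la * K * n - A * n * exp K - \<bar>B\<bar>) / la"
    using la by (simp add: field_simps)
  ultimately have e1: "r * n * ln n + (r * K - A * exp K / la) * n - \<bar>B\<bar> / la \<le> phi_star w (la * n) / la"
    by simp
  have "multi_pow r \<alpha> \<le> real n powr (r * real n)" by (rule multi_pow_le[OF n_def[symmetric] n r])
  also have "\<dots> = exp (r * n * ln n)" using n by (simp add: powr_def)
  also have "\<dots> = exp (\<bar>B\<bar> / la + (A * exp K / la - r * K) * n + (r * n * ln n + (r * K - A * exp K / la) * n - \<bar>B\<bar> / la))"
    by (simp add: algebra_simps)
  also have "\<dots> \<le> exp (\<bar>B\<bar> / la + (A * exp K / la - r * K) * n + phi_star w (la * n) / la)"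
    using e1 by simp
  also have "\<dots> = exp (\<bar>B\<bar> / la) * exp (A * exp K / la - r * K) ^ n * W_seq w la \<alpha>"
    unfolding W_seq_def n_def by (simp add: exp_add exp_of_nat_mult[symmetric] mult.commute)
  also have "\<dots> \<le> exp ((\<bar>B\<bar> + \<bar>w 1\<bar>) / la) * exp (A * exp K / la - r * K) ^ n * W_seq w la \<alpha>"
    using la by (intro mult_right_mono) (auto simp: W_seq_def divide_right_mono)
  finally show ?thesis by (simp add: n_def)
qed

lemma chord:
  assumes w: "weight_function w" and t: "t \<ge> 1" and u: "u \<ge> 0"
  shows "u * (phi_w w t - phi_w w (t - 1)) - phi_w w u \<le> (phi_w w t - phi_w w (t - 1)) * (t + 1) - phi_w w t"
proof -
  define s0 where "s0 = phi_w w t - phi_w w (t - 1)"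
  have s0: "s0 \<ge> 0" using phi_mono[OF w, of "t-1" t] t by (simp add: s0_def)
  have cv: "convex_on {0..} (phi_w w)" by (rule wf_convex[OF w])
  consider "u > t" | "u = t" | "t - 1 < u" "u < t" | "u = t - 1" | "u < t - 1" by linarith
  then have "u * s0 - phi_w w u \<le> s0 * (t + 1) - phi_w w t"
  proof cases
    case 1
    have "(phi_w w (t-1) - phi_w w t) / ((t-1) - t) \<le> (phi_w w t - phi_w w u) / (t - u)"
      using convex_on_slope_le[OF cv, of "t-1" u t] 1 t by auto
    moreover have "(phi_w w t - phi_w w u) / (t - u) = (phi_w w u - phi_w w t) / (u - t)"
      by (metis minus_diff_eq minus_divide_divide)
    moreover have "(phi_w w (t-1) - phi_w w t) / ((t-1) - t) = s0" by (simp add: s0_def)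
    ultimately have "s0 \<le> (phi_w w u - phi_w w t) / (u - t)" by simp
    then have "s0 * (u - t) \<le> phi_w w u - phi_w w t" using 1 by (simp add: pos_le_divide_eq)
    then show ?thesis using s0 by (simp add: algebra_simps)
  next
    case 2 then show ?thesis using s0 by (simp add: algebra_simps)
  next
    case 3
    have "phi_w w (t-1) \<le> phi_w w u" using phi_mono[OF w, of "t-1" u] 3 t by simp
    moreover have "u * s0 \<le> t * s0" using 3 s0 by (intro mult_right_mono) auto
    ultimately show ?thesis by (simp add: s0_def algebra_simps)
  next
    case 4
    have "phi_w w u = phi_w w t - s0" using 4 by (simp add: s0_def)
    moreover have "u * s0 = t * s0 - s0" unfolding 4 by (simp add: left_diff_distrib)
    ultimately show ?thesis using s0 by (simp add: algebra_simps)
  next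
    case 5
    have "(phi_w w u - phi_w w t) / (u - t) \<le> (phi_w w (t-1) - phi_w w t) / ((t-1) - t)"
      using convex_on_slope_le[OF cv, of u t "t-1"] 5 u t by auto
    moreover have "(phi_w w u - phi_w w t) / (u - t) = (phi_w w t - phi_w w u) / (t - u)"
      by (metis minus_diff_eq minus_divide_divide)
    moreover have "(phi_w w (t-1) - phi_w w t) / ((t-1) - t) = s0" by (simp add: s0_def)
    ultimately have "(phi_w w t - phi_w w u) / (t - u) \<le> s0" by simp
    then have "phi_w w t - phi_w w u \<le> s0 * (t - u)" using 5 by (simp add: field_simps)
    then show ?thesis using s0 by (simp add: algebra_simps)
  qed
  then show ?thesis by (simp add: s0_def)
qed

lemma lemmaB:
  fixes w :: "real \<Rightarrow> real"
  assumes w: "weight_function w" and r: "r > 0" and la: "la > 0" and C: "C > 0" and D: "D > 0"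
    and hyp: "\<forall>\<alpha> :: 'd::finite \<Rightarrow> nat. multi_pow r \<alpha> \<le> C * D ^ abs_multi \<alpha> * W_seq w la \<alpha>"
    and x: "x \<ge> exp 1"
  shows "w x \<le> la * (ln x + 1 + ln C) + la * r * exp ((1 + ln D) / r - 1) * x powr (1 / r)"
proof -
  have B1: "- phi_star w (la * m) \<le> la * (ln C + m * ln D - r * m * ln m)" for m :: nat
  proof -
    define \<alpha> :: "'d \<Rightarrow> nat" where "\<alpha> = (\<lambda>i. if i = undefined then m else 0)"
    have am: "abs_multi \<alpha> = m" "multi_pow r \<alpha> = (if m = 0 then 1 else real m powr (r * real m))"
      unfolding \<alpha>_def by (rule single_multi)+
    have h: "multi_pow r \<alpha> \<le> C * D ^ m * exp (phi_star w (la * m) / la)"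
      using hyp[rule_format, of \<alpha>] am by (simp add: W_seq_def)
    have "exp (r * m * ln m) = multi_pow r \<alpha>"
      using am by (cases "m = 0") (auto simp: powr_def)
    also note h
    also have "C * D ^ m * exp (phi_star w (la * m) / la) = exp (ln C + m * ln D + phi_star w (la * m) / la)"
      using C D by (simp add: exp_add exp_of_nat_mult)
    finally have "r * m * ln m \<le> ln C + m * ln D + phi_star w (la * m) / la" by simp
    then have "la * (r * m * ln m) \<le> la * (ln C + m * ln D + phi_star w (la * m) / la)"
      using la by (intro mult_left_mono) auto
    then show ?thesis using la by (simp add: algebra_simps)
  qed
  define t where "t = ln x"
  have x0: "x > 0" using x by (smt (verit) exp_gt_zero)
  have t: "t \<ge> 1" using x x0 by (simp add: t_def ln_ge_iff)
  define s0 where "s0 = phi_w w t - phi_w w (t - 1)"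
  have s0: "s0 \<ge> 0" using phi_mono[OF w, of "t-1" t] t by (simp add: s0_def)
  define n where "n = nat \<lfloor>s0 / la\<rfloor>"
  have fl: "real n \<le> s0 / la" "s0 / la < real n + 1" using s0 la unfolding n_def
    by (auto simp: of_nat_nat)
  have n1: "la * n \<le> s0" "s0 \<le> la * (n + 1)" using fl la by (auto simp: field_simps)
  have "phi_star w (la * n) \<le> s0 * (t + 1) - phi_w w t"
    unfolding phi_star_def
  proof (rule cSUP_least)
    fix u :: real assume u: "u \<in> {0..}"
    have "u * (la * n) \<le> u * s0" using u n1 by (intro mult_left_mono) auto
    then show "u * (la * real n) - phi_w w u \<le> s0 * (t + 1) - phi_w w t"
      using chord[OF w t, of u] u by (simp add: s0_def)
  qed auto
  then have "phi_w w t \<le> s0 * (t + 1) - phi_star w (la * n)" by simp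
  also have "s0 * (t + 1) \<le> la * (n + 1) * (t + 1)" using n1 t by (intro mult_right_mono) auto
  finally have "phi_w w t \<le> la * (n + 1) * (t + 1) + la * (ln C + n * ln D - r * n * ln n)"
    using B1[of n] by linarith
  also have "\<dots> = la * (t + 1) + la * ln C + la * (n * ((t + 1 + ln D) - r * ln n))"
    by (simp add: algebra_simps)
  also have "n * ((t + 1 + ln D) - r * ln n) \<le> r * exp ((t + 1 + ln D) / r - 1)"
    using key_ineq[of n r "t + 1 + ln D"] r by (cases "n = 0") auto
  finally have "phi_w w t \<le> la * (t + 1) + la * ln C + la * (r * exp ((t + 1 + ln D) / r - 1))"
    using la by simp
  moreover have "exp ((t + 1 + ln D) / r - 1) = exp ((1 + ln D) / r - 1) * x powr (1 / r)"
    using x0 r by (simp add: powr_def t_def exp_add[symmetric] field_simps)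
  moreover have "phi_w w t = w x" using x0 by (simp add: phi_w_def t_def)
  ultimately show ?thesis by (simp add: t_def algebra_simps)
qed

lemma ev_bound:
  fixes w :: "real \<Rightarrow> real"
  assumes w: "weight_function w" and c: "c > 0"
    and ev: "eventually (\<lambda>x. norm (w x) \<le> c * norm (x powr (1/r))) at_top"
  shows "\<exists>B. \<forall>x\<ge>1. w x \<le> c * x powr (1/r) + B"
proof -
  obtain N where N: "\<And>x. x \<ge> N \<Longrightarrow> norm (w x) \<le> c * norm (x powr (1/r))"
    using ev by (auto simp: eventually_at_top_linorder)
  define X where "X = max N 1"
  have "w x \<le> c * x powr (1/r) + c * X powr (1/r)" if x: "x \<ge> 1" for x
  proof (cases "x \<ge> X")
    case True
    then have "\<bar>w x\<bar> \<le> c * x powr (1/r)" using N[of x] X_def by auto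
    moreover have "0 \<le> c * X powr (1/r)" using c by simp
    ultimately show ?thesis by linarith
  next
    case False
    then have "w x \<le> w X" using x by (intro wf_mono[OF w]) auto
    also have "w X \<le> c * X powr (1/r)" using N[of X] X_def by auto
    finally show ?thesis using c by (smt (verit) mult_nonneg_nonneg powr_ge_zero)
  qed
  then show ?thesis by blast
qed

lemma small_aux: "r > 0 \<Longrightarrow> (\<lambda>x::real. a * (ln x + b)) \<in> o[at_top](\<lambda>x. x powr (1/r))"
  by real_asymp

lemma big_aux: "r > 0 \<Longrightarrow> (\<lambda>x::real. a * (ln x + b) + M * x powr (1/r)) \<in> O[at_top](\<lambda>x. x powr (1/r))"
proof -
  assume r: "r > 0"
  have "(\<lambda>x::real. a * (ln x + b)) \<in> O[at_top](\<lambda>x. x powr (1/r))"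
    using landau_o.small_imp_big[OF small_aux[OF r]] .
  moreover have "(\<lambda>x::real. M * x powr (1/r)) \<in> O[at_top](\<lambda>x. x powr (1/r))"
    by simp
  ultimately show ?thesis by (rule sum_in_bigo)
qed

theorem lemma6p6:
  fixes \<omega> :: "real \<Rightarrow> real" and r :: real
  assumes "weight_function \<omega>" and "r > 0"
  shows
   "(\<omega> \<in> O[at_top](\<lambda>t. t powr (1 / r)) \<longleftrightarrow>
      (\<forall>la>0. \<exists>C\<ge>1. \<exists>D\<ge>1. \<forall>\<alpha> :: 'd::finite \<Rightarrow> nat.
          multi_pow r \<alpha> \<le> C * D ^ abs_multi \<alpha> * W_seq \<omega> la \<alpha>)) \<and>
    (\<omega> \<in> O[at_top](\<lambda>t. t powr (1 / r)) \<longleftrightarrow>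
      (\<exists>la>0. \<exists>C\<ge>1. \<exists>D\<ge>1. \<forall>\<alpha> :: 'd \<Rightarrow> nat.
          multi_pow r \<alpha> \<le> C * D ^ abs_multi \<alpha> * W_seq \<omega> la \<alpha>)) \<and>
    (\<omega> \<in> o[at_top](\<lambda>t. t powr (1 / r)) \<longleftrightarrow>
      (\<forall>la>0. \<forall>D>0. \<exists>C\<ge>1. \<forall>\<alpha> :: 'd \<Rightarrow> nat.
          multi_pow r \<alpha> \<le> C * D ^ abs_multi \<alpha> * W_seq \<omega> la \<alpha>)) \<and>
    (\<omega> \<in> o[at_top](\<lambda>t. t powr (1 / r)) \<longleftrightarrow>
      (\<exists>la>0. \<forall>D>0. \<exists>C\<ge>1. \<forall>\<alpha> :: 'd \<Rightarrow> nat.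
          multi_pow r \<alpha> \<le> C * D ^ abs_multi \<alpha> * W_seq \<omega> la \<alpha>))"
proof -
  have w: "weight_function \<omega>" and r: "r > 0" by fact+
  have w0: "\<And>x. x \<ge> 0 \<Longrightarrow> \<omega> x \<ge> 0" using wf_nonneg[OF w] .
  have O_to: "\<forall>la>0. \<exists>C\<ge>1. \<exists>D\<ge>1. \<forall>\<alpha> :: 'd \<Rightarrow> nat.
          multi_pow r \<alpha> \<le> C * D ^ abs_multi \<alpha> * W_seq \<omega> la \<alpha>"
    if O: "\<omega> \<in> O[at_top](\<lambda>t. t powr (1 / r))"
  proof (intro allI impI)
    fix la :: real assume la: "la > 0"
    obtain c where c: "c > 0" "eventually (\<lambda>x. norm (\<omega> x) \<le> c * norm (x powr (1/r))) at_top"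
      using landau_o.bigE[OF O] by blast
    obtain B where B: "\<forall>x\<ge>1. \<omega> x \<le> c * x powr (1/r) + B" using ev_bound[OF w c] by blast
    have "\<forall>\<alpha> :: 'd \<Rightarrow> nat. multi_pow r \<alpha> \<le> exp ((\<bar>B\<bar> + \<bar>\<omega> 1\<bar>) / la) * exp (c * exp 0 / la - r * 0) ^ abs_multi \<alpha> * W_seq \<omega> la \<alpha>"
      using lemmaA[OF w r la c(1), of 0 B] B by auto
    moreover have "exp ((\<bar>B\<bar> + \<bar>\<omega> 1\<bar>) / la) \<ge> 1" "exp (c * exp 0 / la - r * 0) \<ge> 1"
      using la c by auto
    ultimately show "\<exists>C\<ge>1. \<exists>D\<ge>1. \<forall>\<alpha> :: 'd \<Rightarrow> nat.
          multi_pow r \<alpha> \<le> C * D ^ abs_multi \<alpha> * W_seq \<omega> la \<alpha>" by blast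
  qed
  have o_to: "\<forall>la>0. \<forall>D>0. \<exists>C\<ge>1. \<forall>\<alpha> :: 'd \<Rightarrow> nat.
          multi_pow r \<alpha> \<le> C * D ^ abs_multi \<alpha> * W_seq \<omega> la \<alpha>"
    if o: "\<omega> \<in> o[at_top](\<lambda>t. t powr (1 / r))"
  proof (intro allI impI)
    fix la D :: real assume la: "la > 0" and D: "D > 0"
    define K where "K = max 0 ((1 - ln D) / r)"
    define A where "A = la * exp (- K)"
    have "r * K \<ge> r * ((1 - ln D) / r)" using r by (intro mult_left_mono) (auto simp: K_def)
    then have K: "K \<ge> 0" "r * K \<ge> 1 - ln D" using r by (auto simp: K_def)
    have A: "A > 0" using la by (simp add: A_def)
    have ev: "eventually (\<lambda>x. norm (\<omega> x) \<le> A * norm (x powr (1/r))) at_top"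
      using landau_o.smallD[OF o A] .
    obtain B where B: "\<forall>x\<ge>1. \<omega> x \<le> A * x powr (1/r) + B" using ev_bound[OF w A ev] by blast
    have main: "\<forall>\<alpha> :: 'd \<Rightarrow> nat. multi_pow r \<alpha> \<le> exp ((\<bar>B\<bar> + \<bar>\<omega> 1\<bar>) / la) * exp (A * exp K / la - r * K) ^ abs_multi \<alpha> * W_seq \<omega> la \<alpha>"
      using lemmaA[OF w r la A K(1), of B] B by auto
    have "A * exp K / la - r * K = 1 - r * K" using la by (simp add: A_def exp_minus field_simps)
    also have "\<dots> \<le> ln D" using K by simp
    finally have E: "exp (A * exp K / la - r * K) \<le> D" using D
      by (metis exp_le_cancel_iff exp_ln)
    have "\<forall>\<alpha> :: 'd \<Rightarrow> nat. multi_pow r \<alpha> \<le> exp ((\<bar>B\<bar> + \<bar>\<omega> 1\<bar>) / la) * D ^ abs_multi \<alpha> * W_seq \<omega> la \<alpha>"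
    proof
      fix \<alpha> :: "'d \<Rightarrow> nat"
      have "exp (A * exp K / la - r * K) ^ abs_multi \<alpha> \<le> D ^ abs_multi \<alpha>"
        using E by (intro power_mono) auto
      then have "exp ((\<bar>B\<bar> + \<bar>\<omega> 1\<bar>) / la) * exp (A * exp K / la - r * K) ^ abs_multi \<alpha> * W_seq \<omega> la \<alpha>
          \<le> exp ((\<bar>B\<bar> + \<bar>\<omega> 1\<bar>) / la) * D ^ abs_multi \<alpha> * W_seq \<omega> la \<alpha>"
        by (intro mult_right_mono mult_left_mono) (auto simp: W_seq_def)
      then show "multi_pow r \<alpha> \<le> exp ((\<bar>B\<bar> + \<bar>\<omega> 1\<bar>) / la) * D ^ abs_multi \<alpha> * W_seq \<omega> la \<alpha>"
        using main by (meson order_trans)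
    qed
    moreover have "exp ((\<bar>B\<bar> + \<bar>\<omega> 1\<bar>) / la) \<ge> 1" using la by auto
    ultimately show "\<exists>C\<ge>1. \<forall>\<alpha> :: 'd \<Rightarrow> nat.
          multi_pow r \<alpha> \<le> C * D ^ abs_multi \<alpha> * W_seq \<omega> la \<alpha>" by blast
  qed
  have to_O: "\<omega> \<in> O[at_top](\<lambda>t. t powr (1 / r))"
    if ex: "\<exists>la>0. \<exists>C\<ge>1. \<exists>D\<ge>1. \<forall>\<alpha> :: 'd \<Rightarrow> nat.
          multi_pow r \<alpha> \<le> C * D ^ abs_multi \<alpha> * W_seq \<omega> la \<alpha>"
  proof -
    obtain la C D where la: "la > 0" and C: "C \<ge> 1" and D: "D \<ge> 1"
      and h: "\<forall>\<alpha> :: 'd \<Rightarrow> nat. multi_pow r \<alpha> \<le> C * D ^ abs_multi \<alpha> * W_seq \<omega> la \<alpha>"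
      using ex by blast
    define M where "M = la * r * exp ((1 + ln D) / r - 1)"
    have b: "\<omega> x \<le> la * (ln x + (1 + ln C)) + M * x powr (1 / r)" if "x \<ge> exp 1" for x
      using lemmaB[OF w r la _ _ h that] C D by (simp add: M_def algebra_simps)
    have "eventually (\<lambda>x. norm (\<omega> x) \<le> norm (la * (ln x + (1 + ln C)) + M * x powr (1 / r))) at_top"
      using eventually_ge_at_top[of "exp 1"]
    proof eventually_elim
      case (elim x)
      have "x \<ge> 0" using elim by (smt (verit) exp_gt_zero)
      then show ?case using b[OF elim] w0[of x] by simp
    qed
    then have "\<omega> \<in> O[at_top](\<lambda>x. la * (ln x + (1 + ln C)) + M * x powr (1 / r))"
      by (rule landau_o.big_mono)
    then show ?thesis using big_aux[OF r] by (rule landau_o.big_trans)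
  qed
  have to_o: "\<omega> \<in> o[at_top](\<lambda>t. t powr (1 / r))"
    if ex: "\<exists>la>0. \<forall>D>0. \<exists>C\<ge>1. \<forall>\<alpha> :: 'd \<Rightarrow> nat.
          multi_pow r \<alpha> \<le> C * D ^ abs_multi \<alpha> * W_seq \<omega> la \<alpha>"
  proof (rule landau_o.smallI)
    fix c :: real assume c: "c > 0"
    obtain la where la: "la > 0" and hD: "\<forall>D>0. \<exists>C\<ge>1. \<forall>\<alpha> :: 'd \<Rightarrow> nat.
          multi_pow r \<alpha> \<le> C * D ^ abs_multi \<alpha> * W_seq \<omega> la \<alpha>"
      using ex by blast
    define D where "D = exp (r * (ln (c / (2 * la * r)) + 1) - 1)"
    have D: "D > 0" by (simp add: D_def)
    obtain C where C: "C \<ge> 1" and h: "\<forall>\<alpha> :: 'd \<Rightarrow> nat. multi_pow r \<alpha> \<le> C * D ^ abs_multi \<alpha> * W_seq \<omega> la \<alpha>"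
      using hD D by blast
    have "(1 + ln D) / r - 1 = ln (c / (2 * la * r))" using r by (simp add: D_def field_simps)
    then have eqc: "la * r * exp ((1 + ln D) / r - 1) = c / 2" using la r c by simp
    have b: "\<omega> x \<le> la * (ln x + (1 + ln C)) + c / 2 * x powr (1 / r)" if "x \<ge> exp 1" for x
    proof -
      have "\<omega> x \<le> la * (ln x + 1 + ln C) + la * r * exp ((1 + ln D) / r - 1) * x powr (1 / r)"
        using lemmaB[OF w r la _ D h that] C by simp
      then show ?thesis unfolding eqc by (simp add: algebra_simps)
    qed
    have "eventually (\<lambda>x. norm (la * (ln x + (1 + ln C))) \<le> c / 2 * norm (x powr (1/r))) at_top"
      using landau_o.smallD[OF small_aux[OF r], of "c/2"] c by simp
    then show "eventually (\<lambda>x. norm (\<omega> x) \<le> c * norm (x powr (1/r))) at_top"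
      using eventually_ge_at_top[of "exp 1"]
    proof eventually_elim
      case (elim x)
      have "x \<ge> 0" using elim by (smt (verit) exp_gt_zero)
      then show ?case using b[OF elim(2)] w0[of x] elim(1) by simp
    qed
  qed
  show ?thesis
  proof (intro conjI)
    show "(\<omega> \<in> O[at_top](\<lambda>t. t powr (1 / r))) = (\<forall>la>0. \<exists>C\<ge>1. \<exists>D\<ge>1. \<forall>\<alpha> :: 'd \<Rightarrow> nat.
          multi_pow r \<alpha> \<le> C * D ^ abs_multi \<alpha> * W_seq \<omega> la \<alpha>)"
      using O_to to_O zero_less_one by blast
    show "(\<omega> \<in> O[at_top](\<lambda>t. t powr (1 / r))) = (\<exists>la>0. \<exists>C\<ge>1. \<exists>D\<ge>1. \<forall>\<alpha> :: 'd \<Rightarrow> nat.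
          multi_pow r \<alpha> \<le> C * D ^ abs_multi \<alpha> * W_seq \<omega> la \<alpha>)"
      using O_to to_O zero_less_one by blast
    show "(\<omega> \<in> o[at_top](\<lambda>t. t powr (1 / r))) = (\<forall>la>0. \<forall>D>0. \<exists>C\<ge>1. \<forall>\<alpha> :: 'd \<Rightarrow> nat.
          multi_pow r \<alpha> \<le> C * D ^ abs_multi \<alpha> * W_seq \<omega> la \<alpha>)"
      using o_to to_o zero_less_one by blast
    show "(\<omega> \<in> o[at_top](\<lambda>t. t powr (1 / r))) = (\<exists>la>0. \<forall>D>0. \<exists>C\<ge>1. \<forall>\<alpha> :: 'd \<Rightarrow> nat.
          multi_pow r \<alpha> \<le> C * D ^ abs_multi \<alpha> * W_seq \<omega> la \<alpha>)"
      using o_to to_o zero_less_one by blast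
  qed
qed

end
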